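(* Let $(L,\nu,\tau)$ be a Šerstnev random normed space whose triangle function satisfies $\tau(F,G)(x)\ge\sup_{t\in[0,1]}\min\{F(tx),G((1-t)x)\}$ for all $x\ge0$ and $F,G\in D^+$. If $A\subset L$ is convex and $\epsilon>0$, then $A_\epsilon=\{q\in L:\exists p\in A,\ \nu(p-q)(\epsilon)>1-\epsilon\}$ is convex.
   Context: $\Delta^+$ is the set of functions $F:[-\infty,\infty]\to[0,1]$ that are nondecreasing, left-continuous on $\mathbb R$, with $F(-\infty)=0$, $F(\infty)=1$, $F(0)=0$; ordered pointwise; $D^+=\{F\in\Delta^+:\lim_{x\to\infty}F(x)=1\}$; $\epsilon_0(x)=0$ for $x\le0$, $=1$ for $x>0$. A triangle function is $\tau:\Delta^+\times\Delta^+\to\Delta^+$ commutative, associative, nondecreasing in each argument, with $\tau(F,\epsilon_0)=F$, continuous for weak convergence. A Šerstnev random normed space $(L,\nu,\tau)$: $L$ a real vector space, $\tau$ a continuous triangle function with $\tau(D^+\times D^+)\subset D^+$, $\nu:L\to D^+$ with $\nu(p)=\epsilon_0\iff p=0$; $\nu(ap)(x)=\nu(p)(x/|a|)$ for $x\ge0$, $a\ne0$; $\nu(p+q)\ge\tau(\nu(p),\nu(q))$. *)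

theory Defs
  imports "HOL-Analysis.Analysis"
begin

text \<open>An element F of Delta-plus is determined by its
restriction to the reals, since F(-infinity) = 0 and F(infinity) = 1 are fixed; we therefore
represent distribution functions as functions real to real (values at the infinities implicit).\<close>

definition delta_plus :: "(real \<Rightarrow> real) set" where
  "delta_plus = {F. mono F \<and> (\<forall>x. continuous (at_left x) F)
                    \<and> (\<forall>x. 0 \<le> F x \<and> F x \<le> 1) \<and> F 0 = 0}"

definition D_plus :: "(real \<Rightarrow> real) set" where
  "D_plus = {F. F \<in> delta_plus \<and> (F \<longlongrightarrow> 1) at_top}"

definition eps0 :: "real \<Rightarrow> real" where
  "eps0 x = (if x \<le> 0 then 0 else 1)"

definition weak_conv :: "(nat \<Rightarrow> real \<Rightarrow> real) \<Rightarrow> (real \<Rightarrow> real) \<Rightarrow> bool" where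
  "weak_conv Fs F \<longleftrightarrow> (\<forall>x. isCont F x \<longrightarrow> (\<lambda>n. Fs n x) \<longlonglongrightarrow> F x)"

definition triangle_function ::
  "((real \<Rightarrow> real) \<Rightarrow> (real \<Rightarrow> real) \<Rightarrow> (real \<Rightarrow> real)) \<Rightarrow> bool" where
  "triangle_function \<tau> \<longleftrightarrow>
     (\<forall>F\<in>delta_plus. \<forall>G\<in>delta_plus. \<tau> F G \<in> delta_plus)
   \<and> (\<forall>F\<in>delta_plus. \<forall>G\<in>delta_plus. \<tau> F G = \<tau> G F)
   \<and> (\<forall>F\<in>delta_plus. \<forall>G\<in>delta_plus. \<forall>H\<in>delta_plus. \<tau> (\<tau> F G) H = \<tau> F (\<tau> G H))
   \<and> (\<forall>F\<in>delta_plus. \<forall>G\<in>delta_plus. \<forall>H\<in>delta_plus. F \<le> G \<longrightarrow> \<tau> F H \<le> \<tau> G H)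
   \<and> (\<forall>F\<in>delta_plus. \<tau> F eps0 = F)
   \<and> (\<forall>Fs F Gs G. (\<forall>n. Fs n \<in> delta_plus) \<longrightarrow> (\<forall>n. Gs n \<in> delta_plus)
        \<longrightarrow> F \<in> delta_plus \<longrightarrow> G \<in> delta_plus
        \<longrightarrow> weak_conv Fs F \<longrightarrow> weak_conv Gs G
        \<longrightarrow> weak_conv (\<lambda>n. \<tau> (Fs n) (Gs n)) (\<tau> F G))"

definition serstnev_rns ::
  "('a::real_vector \<Rightarrow> real \<Rightarrow> real) \<Rightarrow> ((real \<Rightarrow> real) \<Rightarrow> (real \<Rightarrow> real) \<Rightarrow> (real \<Rightarrow> real)) \<Rightarrow> bool"
  where
  "serstnev_rns \<nu> \<tau> \<longleftrightarrow>
     triangle_function \<tau>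
   \<and> (\<forall>F\<in>D_plus. \<forall>G\<in>D_plus. \<tau> F G \<in> D_plus)
   \<and> (\<forall>p. \<nu> p \<in> D_plus)
   \<and> (\<forall>p. \<nu> p = eps0 \<longleftrightarrow> p = 0)
   \<and> (\<forall>a p x. a \<noteq> 0 \<longrightarrow> x \<ge> 0 \<longrightarrow> \<nu> (a *\<^sub>R p) x = \<nu> p (x / \<bar>a\<bar>))
   \<and> (\<forall>p q. \<tau> (\<nu> p) (\<nu> q) \<le> \<nu> (p + q))"

end

theory Submission
  imports Defs
begin

theorem mainTheorem7:
  fixes \<nu> :: "'a::real_vector \<Rightarrow> real \<Rightarrow> real"
    and \<tau> :: "(real \<Rightarrow> real) \<Rightarrow> (real \<Rightarrow> real) \<Rightarrow> (real \<Rightarrow> real)"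
    and A :: "'a set" and \<epsilon> :: real
  assumes "serstnev_rns \<nu> \<tau>"
    and "\<forall>F\<in>D_plus. \<forall>G\<in>D_plus. \<forall>x\<ge>0.
           (SUP t\<in>{0..1}. min (F (t * x)) (G ((1 - t) * x))) \<le> \<tau> F G x"
    and "convex A"
    and "\<epsilon> > 0"
  shows "convex {q. \<exists>p\<in>A. \<nu> (p - q) \<epsilon> > 1 - \<epsilon>}"
proof (rule convexI)
  fix x y :: 'a and u v :: real
  assume x: "x \<in> {q. \<exists>p\<in>A. \<nu> (p - q) \<epsilon> > 1 - \<epsilon>}"
    and y: "y \<in> {q. \<exists>p\<in>A. \<nu> (p - q) \<epsilon> > 1 - \<epsilon>}"
    and u: "0 \<le> u" and v: "0 \<le> v" and uv: "u + v = 1"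
  from x obtain p1 where p1: "p1 \<in> A" "\<nu> (p1 - x) \<epsilon> > 1 - \<epsilon>" by auto
  from y obtain p2 where p2: "p2 \<in> A" "\<nu> (p2 - y) \<epsilon> > 1 - \<epsilon>" by auto
  have nuD: "\<And>p. \<nu> p \<in> D_plus" using assms(1) unfolding serstnev_rns_def by blast
  have sc: "\<And>a p x. a \<noteq> 0 \<Longrightarrow> x \<ge> 0 \<Longrightarrow> \<nu> (a *\<^sub>R p) x = \<nu> p (x / \<bar>a\<bar>)"
    using assms(1) unfolding serstnev_rns_def by blast
  have tri: "\<And>p q. \<tau> (\<nu> p) (\<nu> q) \<le> \<nu> (p + q)"
    using assms(1) unfolding serstnev_rns_def by blast
  have bnd: "\<And>p z. 0 \<le> \<nu> p z \<and> \<nu> p z \<le> 1"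
    using nuD unfolding D_plus_def delta_plus_def by blast
  define p where "p = u *\<^sub>R p1 + v *\<^sub>R p2"
  have pA: "p \<in> A" using assms(3) p1(1) p2(1) u v uv unfolding p_def convex_def by blast
  show "u *\<^sub>R x + v *\<^sub>R y \<in> {q. \<exists>p\<in>A. \<nu> (p - q) \<epsilon> > 1 - \<epsilon>}"
  proof (cases "u = 0 \<or> v = 0")
    case True
    then show ?thesis
    proof
      assume "u = 0" then have "v = 1" using uv by simp
      then show ?thesis using \<open>u = 0\<close> p2 by auto
    next
      assume "v = 0" then have "u = 1" using uv by simp
      then show ?thesis using \<open>v = 0\<close> p1 by auto
    qed
  next
    case False
    then have up: "u > 0" and vp: "v > 0" using u v by auto
    define r1 where "r1 = p1 - x"
    define r2 where "r2 = p2 - y"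
    have diff: "p - (u *\<^sub>R x + v *\<^sub>R y) = u *\<^sub>R r1 + v *\<^sub>R r2"
      unfolding p_def r1_def r2_def by (simp add: algebra_simps)
    have e1: "\<nu> (u *\<^sub>R r1) (u * \<epsilon>) = \<nu> r1 \<epsilon>"
      using sc[where a=u and p=r1 and x="u * \<epsilon>"] up assms(4) by simp
    have e2: "\<nu> (v *\<^sub>R r2) ((1 - u) * \<epsilon>) = \<nu> r2 \<epsilon>"
      using sc[where a=v and p=r2 and x="v * \<epsilon>"] vp assms(4) uv by (subgoal_tac "1 - u = v") simp_all
    have bdd: "bdd_above ((\<lambda>t. min (\<nu> (u *\<^sub>R r1) (t * \<epsilon>)) (\<nu> (v *\<^sub>R r2) ((1 - t) * \<epsilon>))) ` {0..1})"
      by (rule bdd_aboveI[where M=1]) (auto simp: bnd min_le_iff_disj)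
    have "min (\<nu> r1 \<epsilon>) (\<nu> r2 \<epsilon>)
        = min (\<nu> (u *\<^sub>R r1) (u * \<epsilon>)) (\<nu> (v *\<^sub>R r2) ((1 - u) * \<epsilon>))"
      using e1 e2 by simp
    also have "\<dots> \<le> (SUP t\<in>{0..1}. min (\<nu> (u *\<^sub>R r1) (t * \<epsilon>)) (\<nu> (v *\<^sub>R r2) ((1 - t) * \<epsilon>)))"
      by (rule cSUP_upper[OF _ bdd]) (use u uv v in auto)
    also have "\<dots> \<le> \<tau> (\<nu> (u *\<^sub>R r1)) (\<nu> (v *\<^sub>R r2)) \<epsilon>"
      using assms(2) nuD assms(4) by auto
    also have "\<dots> \<le> \<nu> (u *\<^sub>R r1 + v *\<^sub>R r2) \<epsilon>"
      using tri by (simp add: le_fun_def)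
    finally have "min (\<nu> r1 \<epsilon>) (\<nu> r2 \<epsilon>) \<le> \<nu> (p - (u *\<^sub>R x + v *\<^sub>R y)) \<epsilon>"
      using diff by simp
    moreover have "min (\<nu> r1 \<epsilon>) (\<nu> r2 \<epsilon>) > 1 - \<epsilon>"
      using p1(2) p2(2) r1_def r2_def by simp
    ultimately show ?thesis using pA by force
  qed
qed

end
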